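(* Consider the quantized estimation system below, under the assumption that all partitioned observation subvectors $\{\mathbf{x}_{jl}\}$ are known to be independent, with $\mathbf{x}_{jl}$ having statistical model $(\mathscr{X}_{jl},\mathscr{F}_{jl},\mathscr{P}_{jl}^{\boldsymbol{\theta}})$. (i) Suppose the interior of $\boldsymbol{\Theta}\subset\mathbb{R}^{D_{\boldsymbol{\theta}}}$ is nonempty and every $q_j^{(\mathbf{s})}(\boldsymbol{\theta})$ is twice differentiable in $\boldsymbol{\theta}$ on $\boldsymbol{\Theta}$. Then for any $\boldsymbol{\theta}$, any quantization regions $\{I_{jl}^{(r)}\}$ and any statistical models $\{(\mathscr{X}_{jl},\mathscr{F}_{jl},\mathscr{P}_{jl}^{\boldsymbol{\theta}})\}$, if $$D_{\boldsymbol{\theta}} > \lambda_{\text{Indep}}(N,\{R_{jl}\}) := \sum_{j=1}^N\sum_{l=1}^{L_j}R_{jl}-\sum_{j=1}^N L_j,$$ then the Fisher information matrix for estimating $\boldsymbol{\theta}$ is singular. (ii) Suppose the interior of $\boldsymbol{\Theta}$ is nonempty and every $q_j^{(\mathbf{s})}(\boldsymbol{\theta})$ is continuous in $\boldsymbol{\theta}$. Then for any $\{I_{jl}^{(r)}\}$ and any $\{(\mathscr{X}_{jl},\mathscr{F}_{jl},\mathscr{P}_{jl}^{\boldsymbol{\theta}})\}$, if the same inequality $D_{\boldsymbol{\theta}}>\lambda_{\text{Indep}}(N,\{R_{jl}\})$ holds, the vector parameter space $\boldsymbol{\Theta}$ is not identifiable; moreover, every open subset $\mathcal{U}\subset\boldsymbol{\Theta}$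 of $\mathbb{R}^{D_{\boldsymbol{\theta}}}$ contains infinitely many nonidentifiable vector parameter points.
   Context: System: $N$ sensors; sensor $j$ observes $\mathbf{x}_j$ with statistical model $(\mathscr{X}_j,\mathscr{F}_j,\mathscr{P}_j^{\boldsymbol{\theta}})$, independent across $j$, unknown $\boldsymbol{\theta}\in\boldsymbol{\Theta}\subset\mathbb{R}^{D_{\boldsymbol{\theta}}}$. $\mathbf{x}_j$ is partitioned into $L_j$ subvectors $\mathbf{x}_{jl}$, each quantized by an $R_{jl}$-level vector quantizer $\gamma_{jl}(\mathbf{x}_{jl})=\sum_r r\,\mathbb{1}\{\mathbf{x}_{jl}\in I_{jl}^{(r)}\}$ with disjoint covering regions; the superquantizer output $\mathbf{u}_j=\Gamma_j(\mathbf{x}_j)=[\gamma_{j1}(\mathbf{x}_{j1}),\dots,\gamma_{jL_j}(\mathbf{x}_{jL_j})]^T$ is sent error-free to a fusion center, which estimates $\boldsymbol{\theta}$ from $\mathbf{u}=[\mathbf{u}_1^T,\dots,\mathbf{u}_N^T]^T$. $q_j^{(\mathbf{s})}(\boldsymbol{\theta})=\mathscr{P}_j^{\boldsymbol{\theta}}(\Gamma_j(\mathbf{x}_j)=\mathbf{s})$; under independence of subvectors, $q_j^{(\mathbf{s})}(\boldsymbol{\theta})=\prod_{l}\mathscr{P}_{jl}^{\boldsymbol{\theta}}(\gamma_{jl}(\mathbf{x}_{jl})=s_l)$. Fisher information matrix $\mathbf{J}(\boldsymbol{\theta})=\sum_j\sum_{\mathbf{s}}\frac{1}{q_j^{(\mathbf{s})}}\frac{\partial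 q_j^{(\mathbf{s})}}{\partial\boldsymbol{\theta}}\big[\frac{\partial q_j^{(\mathbf{s})}}{\partial\boldsymbol{\theta}}\big]^T$. Two distinct points are observationally equivalent if $\Pr(\mathbf{u}|\boldsymbol{\theta})=\Pr(\mathbf{u}|\boldsymbol{\theta}')$ for all $\mathbf{u}$; a point is identifiable if no other point is observationally equivalent to it; $\boldsymbol{\Theta}$ is identifiable if every point is. *)

theory Defs
  imports "HOL-Probability.Probability"
begin

definition quant :: "(nat \<Rightarrow> 'a set) \<Rightarrow> nat \<Rightarrow> 'a \<Rightarrow> nat" where
  "quant I R x = (\<Sum>r\<in>{1..R}. r * indicator (I r) x)"

definition sensor_outputs :: "nat \<Rightarrow> (nat \<Rightarrow> nat) \<Rightarrow> (nat \<Rightarrow> nat) set" where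
  "sensor_outputs L R = PiE {..<L} (\<lambda>l. {1..R l})"

text \<open>q_j^(s)(theta) under independence of the subvectors of sensor j.\<close>
definition sensor_prob ::
  "(nat \<Rightarrow> nat \<Rightarrow> 'p \<Rightarrow> 'a measure) \<Rightarrow> (nat \<Rightarrow> nat \<Rightarrow> nat \<Rightarrow> 'a set) \<Rightarrow>
   (nat \<Rightarrow> nat \<Rightarrow> nat) \<Rightarrow> (nat \<Rightarrow> nat) \<Rightarrow> nat \<Rightarrow> (nat \<Rightarrow> nat) \<Rightarrow> 'p \<Rightarrow> real" where
  "sensor_prob P I R L j s \<theta> =
     (\<Prod>l<L j. measure (P j l \<theta>) {x \<in> space (P j l \<theta>). quant (I j l) (R j l) x = s l})"

definition joint_outputs :: "nat \<Rightarrow> (nat \<Rightarrow> nat) \<Rightarrow> (nat \<Rightarrow> nat \<Rightarrow> nat) \<Rightarrow> (nat \<Rightarrow> nat \<Rightarrow> nat) set" where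
  "joint_outputs N L R = PiE {..<N} (\<lambda>j. sensor_outputs (L j) (R j))"

definition joint_prob ::
  "(nat \<Rightarrow> nat \<Rightarrow> 'p \<Rightarrow> 'a measure) \<Rightarrow> (nat \<Rightarrow> nat \<Rightarrow> nat \<Rightarrow> 'a set) \<Rightarrow>
   (nat \<Rightarrow> nat \<Rightarrow> nat) \<Rightarrow> (nat \<Rightarrow> nat) \<Rightarrow> nat \<Rightarrow> (nat \<Rightarrow> nat \<Rightarrow> nat) \<Rightarrow> 'p \<Rightarrow> real" where
  "joint_prob P I R L N u \<theta> = (\<Prod>j<N. sensor_prob P I R L j (u j) \<theta>)"

definition obs_equiv :: "'p set \<Rightarrow> 'u set \<Rightarrow> ('u \<Rightarrow> 'p \<Rightarrow> real) \<Rightarrow> 'p \<Rightarrow> 'p \<Rightarrow> bool" where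
  "obs_equiv \<Theta> U Pr \<theta> \<theta>' \<longleftrightarrow> \<theta> \<in> \<Theta> \<and> \<theta>' \<in> \<Theta> \<and> \<theta> \<noteq> \<theta>' \<and> (\<forall>u\<in>U. Pr u \<theta> = Pr u \<theta>')"

definition identifiable_point :: "'p set \<Rightarrow> 'u set \<Rightarrow> ('u \<Rightarrow> 'p \<Rightarrow> real) \<Rightarrow> 'p \<Rightarrow> bool" where
  "identifiable_point \<Theta> U Pr \<theta> \<longleftrightarrow> \<theta> \<in> \<Theta> \<and> \<not> (\<exists>\<theta>'. obs_equiv \<Theta> U Pr \<theta> \<theta>')"

definition nonidentifiable_point :: "'p set \<Rightarrow> 'u set \<Rightarrow> ('u \<Rightarrow> 'p \<Rightarrow> real) \<Rightarrow> 'p \<Rightarrow> bool" where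
  "nonidentifiable_point \<Theta> U Pr \<theta> \<longleftrightarrow> \<theta> \<in> \<Theta> \<and> (\<exists>\<theta>'. obs_equiv \<Theta> U Pr \<theta> \<theta>')"

definition identifiable_space :: "'p set \<Rightarrow> 'u set \<Rightarrow> ('u \<Rightarrow> 'p \<Rightarrow> real) \<Rightarrow> bool" where
  "identifiable_space \<Theta> U Pr \<longleftrightarrow> (\<forall>\<theta>\<in>\<Theta>. identifiable_point \<Theta> U Pr \<theta>)"

definition grad :: "(real^'d \<Rightarrow> real) \<Rightarrow> real^'d \<Rightarrow> real^'d" where
  "grad f \<theta> = (\<chi> i. frechet_derivative f (at \<theta>) (axis i 1))"

definition outer :: "real^'d \<Rightarrow> real^'d^'d" where
  "outer g = (\<chi> i k. g$i * g$k)"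

definition fisher_info ::
  "nat \<Rightarrow> (nat \<Rightarrow> (nat \<Rightarrow> nat) set) \<Rightarrow> (nat \<Rightarrow> (nat \<Rightarrow> nat) \<Rightarrow> real^'d \<Rightarrow> real) \<Rightarrow> real^'d \<Rightarrow> real^'d^'d" where
  "fisher_info N S q \<theta> = (\<Sum>j<N. \<Sum>s\<in>S j. (1 / q j s \<theta>) *\<^sub>R outer (grad (q j s) \<theta>))"

definition twice_differentiable_on :: "(real^'d \<Rightarrow> real) \<Rightarrow> (real^'d) set \<Rightarrow> bool" where
  "twice_differentiable_on f S \<longleftrightarrow>
     (\<exists>g :: real^'d \<Rightarrow> real^'d.
        (\<forall>x\<in>S. (f has_derivative (\<lambda>h. g x \<bullet> h)) (at x within S)) \<and> g differentiable_on S)"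

definition lambda_indep :: "nat \<Rightarrow> (nat \<Rightarrow> nat) \<Rightarrow> (nat \<Rightarrow> nat \<Rightarrow> nat) \<Rightarrow> int" where
  "lambda_indep N L R = (\<Sum>j<N. \<Sum>l<L j. int (R j l)) - (\<Sum>j<N. int (L j))"

end

theory Submission
  imports Defs
begin

definition mg :: "(nat \<Rightarrow> nat \<Rightarrow> 'p \<Rightarrow> 'a measure) \<Rightarrow> (nat \<Rightarrow> nat \<Rightarrow> nat \<Rightarrow> 'a set) \<Rightarrow>
   (nat \<Rightarrow> nat \<Rightarrow> nat) \<Rightarrow> nat \<Rightarrow> nat \<Rightarrow> nat \<Rightarrow> 'p \<Rightarrow> real" where
  "mg P I R j l r \<theta> = measure (P j l \<theta>) {x \<in> space (P j l \<theta>). quant (I j l) (R j l) x = r}"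

lemma sensor_prob_mg: "sensor_prob P I R L j s \<theta> = (\<Prod>l<L j. mg P I R j l (s l) \<theta>)"
  by (simp add: sensor_prob_def mg_def)

lemma quant_eq:
  assumes "disjoint_family_on I {1..R}" "r0 \<in> {1..R}" "x \<in> I r0"
  shows "quant I R x = r0"
proof -
  have "quant I R x = (\<Sum>r\<in>{1..R}. if r = r0 then r0 else 0)"
    unfolding quant_def
  proof (rule sum.cong[OF refl])
    fix r assume r: "r \<in> {1..R}"
    show "r * indicator (I r) x = (if r = r0 then r0 else 0)"
    proof (cases "r = r0")
      case True then show ?thesis using assms by simp
    next
      case False
      then have "x \<notin> I r" using assms r unfolding disjoint_family_on_def by blast
      then show ?thesis using False by simp
    qed
  qed
  also have "\<dots> = r0" using assms(2) by simp
  finally show ?thesis .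
qed

lemma inner_deriv_unique:
  assumes "(f has_derivative (\<lambda>h. a \<bullet> h)) (at x)" "(f has_derivative F) (at x)"
  shows "a \<bullet> v = F v"
  using has_derivative_unique[OF assms] by metis

locale qsys =
  fixes N :: nat and L :: "nat \<Rightarrow> nat" and R :: "nat \<Rightarrow> nat \<Rightarrow> nat"
    and S :: "nat \<Rightarrow> nat \<Rightarrow> 'a measure"
    and P :: "nat \<Rightarrow> nat \<Rightarrow> real^'d \<Rightarrow> 'a measure"
    and I :: "nat \<Rightarrow> nat \<Rightarrow> nat \<Rightarrow> 'a set"
    and \<Theta> :: "(real^'d) set"
  assumes model: "\<And>j l \<theta>. j < N \<Longrightarrow> l < L j \<Longrightarrow> \<theta> \<in> \<Theta> \<Longrightarrow>
                    prob_space (P j l \<theta>) \<and> sets (P j l \<theta>) = sets (S j l)"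
    and regions_meas: "\<And>j l r. j < N \<Longrightarrow> l < L j \<Longrightarrow> r \<in> {1..R j l} \<Longrightarrow> I j l r \<in> sets (S j l)"
    and regions_disj: "\<And>j l. j < N \<Longrightarrow> l < L j \<Longrightarrow> disjoint_family_on (I j l) {1..R j l}"
    and regions_cover: "\<And>j l. j < N \<Longrightarrow> l < L j \<Longrightarrow> (\<Union>r\<in>{1..R j l}. I j l r) = space (S j l)"
    and Theta_ne: "\<Theta> \<noteq> {}"
begin

abbreviation SO where "SO j \<equiv> sensor_outputs (L j) (R j)"
abbreviation q where "q \<equiv> sensor_prob P I R L"
abbreviation m where "m \<equiv> mg P I R"
definition M where "M j l r = (\<lambda>\<theta>. \<Sum>s\<in>{s\<in>SO j. s l = r}. q j s \<theta>)"
definition K where "K = (SIGMA j:{..<N}. SIGMA l:{..<L j}. {1..<R j l})"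

lemma finSO: "finite (SO j)"
  unfolding sensor_outputs_def by (rule finite_PiE) auto

lemma SO_mem: "s \<in> SO j \<Longrightarrow> l < L j \<Longrightarrow> s l \<in> {1..R j l}"
  unfolding sensor_outputs_def by (auto simp: PiE_iff)

lemma space_eq: assumes "j<N" "l<L j" "\<theta>\<in>\<Theta>" shows "space (P j l \<theta>) = space (S j l)"
proof -
  have "sets (P j l \<theta>) = sets (S j l)" using model[OF assms] by simp
  then show ?thesis by (rule sets_eq_imp_space_eq)
qed

lemma R_pos: assumes a: "j<N" "l<L j" shows "1 \<le> R j l"
proof -
  obtain \<theta> where th: "\<theta>\<in>\<Theta>" using Theta_ne by blast
  then have "prob_space (P j l \<theta>)" using model a by blast
  then have "space (P j l \<theta>) \<noteq> {}" by (rule prob_space.not_empty)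
  then have "space (S j l) \<noteq> {}" using space_eq a th by simp
  then have "{1..R j l} \<noteq> {}" using regions_cover[OF a] by auto
  then show ?thesis by simp
qed

lemma level_set: assumes "j<N" "l<L j" "\<theta>\<in>\<Theta>" "r\<in>{1..R j l}"
  shows "{x \<in> space (P j l \<theta>). quant (I j l) (R j l) x = r} = I j l r"
proof (rule equalityI)
  show "{x \<in> space (P j l \<theta>). quant (I j l) (R j l) x = r} \<subseteq> I j l r"
  proof (rule subsetI)
    fix x assume "x \<in> {x \<in> space (P j l \<theta>). quant (I j l) (R j l) x = r}"
    then have x: "x \<in> space (P j l \<theta>)" "quant (I j l) (R j l) x = r" by auto
    have "x \<in> space (S j l)" using x(1) space_eq[OF assms(1-3)] by simp
    then have "x \<in> (\<Union>r\<in>{1..R j l}. I j l r)" using regions_cover[OF assms(1,2)] by simp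
    then obtain r0 where r0: "r0 \<in> {1..R j l}" "x \<in> I j l r0" by (rule UN_E)
    have "quant (I j l) (R j l) x = r0" by (rule quant_eq[OF regions_disj[OF assms(1,2)] r0])
    then show "x \<in> I j l r" using x(2) r0(2) by simp
  qed
next
  show "I j l r \<subseteq> {x \<in> space (P j l \<theta>). quant (I j l) (R j l) x = r}"
  proof (rule subsetI)
    fix x assume xI: "x \<in> I j l r"
    then have "x \<in> (\<Union>r\<in>{1..R j l}. I j l r)" using assms(4) by (rule UN_I[rotated])
    then have "x \<in> space (S j l)" using regions_cover[OF assms(1,2)] by (simp only:)
    then have "x \<in> space (P j l \<theta>)" using space_eq[OF assms(1-3)] by simp
    moreover have "quant (I j l) (R j l) x = r" by (rule quant_eq[OF regions_disj[OF assms(1,2)] assms(4) xI])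
    ultimately show "x \<in> {x \<in> space (P j l \<theta>). quant (I j l) (R j l) x = r}" by simp
  qed
qed

lemma m_sum: assumes "j<N" "l<L j" "\<theta>\<in>\<Theta>" shows "(\<Sum>r\<in>{1..R j l}. m j l r \<theta>) = 1"
proof -
  have ps: "prob_space (P j l \<theta>)" and se: "sets (P j l \<theta>) = sets (S j l)" using model assms by blast+
  interpret prob_space "P j l \<theta>" by (rule ps)
  have "(\<Sum>r\<in>{1..R j l}. m j l r \<theta>) = (\<Sum>r\<in>{1..R j l}. measure (P j l \<theta>) (I j l r))"
    unfolding mg_def by (intro sum.cong refl) (simp add: level_set[OF assms])
  also have "\<dots> = measure (P j l \<theta>) (\<Union>r\<in>{1..R j l}. I j l r)"
    by (rule finite_measure_finite_Union[symmetric])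
       (use regions_meas[OF assms(1,2)] regions_disj[OF assms(1,2)] se in auto)
  also have "\<dots> = 1" using regions_cover[OF assms(1,2)] space_eq[OF assms] prob_space.prob_space[OF ps] by simp
  finally show ?thesis .
qed

lemma marginal: assumes "j<N" "l<L j" "\<theta>\<in>\<Theta>" "r\<in>{1..R j l}"
  shows "m j l r \<theta> = M j l r \<theta>"
proof -
  define B where "B = (\<lambda>l'. if l' = l then {r} else {1..R j l'})"
  have set_eq: "{s\<in>SO j. s l = r} = PiE {..<L j} B"
  proof (rule set_eqI)
    fix s
    have "s \<in> {s\<in>SO j. s l = r} \<longleftrightarrow> (\<forall>i\<in>{..<L j}. s i \<in> {1..R j i}) \<and> s \<in> extensional {..<L j} \<and> s l = r"
      unfolding sensor_outputs_def PiE_iff by blast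
    also have "\<dots> \<longleftrightarrow> (\<forall>i\<in>{..<L j}. s i \<in> B i) \<and> s \<in> extensional {..<L j}"
      unfolding B_def using assms(2,4) by force
    also have "\<dots> \<longleftrightarrow> s \<in> PiE {..<L j} B" unfolding PiE_iff by blast
    finally show "s \<in> {s\<in>SO j. s l = r} \<longleftrightarrow> s \<in> PiE {..<L j} B" .
  qed
  have "M j l r \<theta> = (\<Sum>s\<in>PiE {..<L j} B. \<Prod>l'<L j. m j l' (s l') \<theta>)"
    unfolding M_def set_eq sensor_prob_mg ..
  also have "\<dots> = (\<Prod>l'<L j. \<Sum>y\<in>B l'. m j l' y \<theta>)"
    by (rule prod_sum_PiE[symmetric]) (simp_all add: B_def)
  also have "\<dots> = (\<Prod>l'<L j. if l' = l then m j l r \<theta> else 1)"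
  proof (rule prod.cong[OF refl])
    fix l' assume l': "l' \<in> {..<L j}"
    show "(\<Sum>y\<in>B l'. m j l' y \<theta>) = (if l' = l then m j l r \<theta> else 1)"
    proof (cases "l' = l")
      case True then show ?thesis by (simp add: B_def)
    next
      case False
      then have "(\<Sum>y\<in>B l'. m j l' y \<theta>) = (\<Sum>y\<in>{1..R j l'}. m j l' y \<theta>)" by (simp add: B_def)
      also have "\<dots> = 1" using m_sum[OF assms(1) _ assms(3)] l' by simp
      finally show ?thesis using False by simp
    qed
  qed
  also have "\<dots> = m j l r \<theta>" using assms(2) by (simp add: prod.delta)
  finally show ?thesis ..
qed

lemma q_M: assumes "j<N" "s\<in>SO j" "\<theta>\<in>\<Theta>"
  shows "q j s \<theta> = (\<Prod>l<L j. M j l (s l) \<theta>)"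
  unfolding sensor_prob_mg
  by (intro prod.cong refl) (use marginal[OF assms(1) _ assms(3)] SO_mem[OF assms(2)] in auto)

lemma finK: "finite K"
  unfolding K_def by (auto intro!: finite_SigmaI)

lemma cardK: "int (card K) = lambda_indep N L R"
proof -
  have "card K = (\<Sum>j<N. \<Sum>l<L j. R j l - 1)"
    unfolding K_def by (simp add: card_SigmaI)
  then have "int (card K) = (\<Sum>j<N. \<Sum>l<L j. int (R j l - 1))"
    by (simp add: of_nat_sum)
  also have "\<dots> = (\<Sum>j<N. \<Sum>l<L j. int (R j l) - 1)"
  proof -
    have e: "int (R j l - 1) = int (R j l) - 1" if "j<N" "l<L j" for j l using R_pos[OF that] by simp
    show ?thesis by (rule sum.cong[OF refl], rule sum.cong[OF refl], rule e) auto
  qed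
  also have "\<dots> = lambda_indep N L R"
    by (simp add: lambda_indep_def sum_subtractf)
  finally show ?thesis .
qed

lemma fisher_singular:
  assumes td: "\<forall>j<N. \<forall>s\<in>SO j. twice_differentiable_on (q j s) \<Theta>"
    and th: "\<theta> \<in> interior \<Theta>"
    and dimh: "int CARD('d) > lambda_indep N L R"
  shows "\<not> invertible (fisher_info N (\<lambda>j. sensor_outputs (L j) (R j)) (sensor_prob P I R L) \<theta>)"
proof
  assume inv: "invertible (fisher_info N (\<lambda>j. sensor_outputs (L j) (R j)) (sensor_prob P I R L) \<theta>)"
  have thT: "\<theta> \<in> \<Theta>" using th by (rule subsetD[OF interior_subset])
  have ex: "\<exists>gv. (q j s has_derivative (\<lambda>h. gv \<bullet> h)) (at \<theta>)" if "j<N" "s\<in>SO j" for j s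
  proof -
    have "twice_differentiable_on (q j s) \<Theta>" using td that by simp
    then obtain G :: "real^'d \<Rightarrow> real^'d" where G: "\<forall>x\<in>\<Theta>. (q j s has_derivative (\<lambda>h. G x \<bullet> h)) (at x within \<Theta>)"
      unfolding twice_differentiable_on_def by (elim exE conjE) simp
    then have "(q j s has_derivative (\<lambda>h. G \<theta> \<bullet> h)) (at \<theta> within \<Theta>)" using thT by simp
    then have "(q j s has_derivative (\<lambda>h. G \<theta> \<bullet> h)) (at \<theta>)" using at_within_interior[OF th] by simp
    then show ?thesis by (rule exI)
  qed
  define g where "g j s = (SOME gv. (q j s has_derivative (\<lambda>h. gv \<bullet> h)) (at \<theta>))" for j s
  have g: "(q j s has_derivative (\<lambda>h. g j s \<bullet> h)) (at \<theta>)" if "j<N" "s\<in>SO j" for j s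
    unfolding g_def by (rule someI_ex[OF ex[OF that]])
  define GM where "GM j l r = (\<Sum>s\<in>{s\<in>SO j. s l = r}. g j s)" for j l r
  have dM: "(M j l r has_derivative (\<lambda>h. GM j l r \<bullet> h)) (at \<theta>)" if "j<N" for j l r
  proof -
    have "((\<lambda>x. \<Sum>s\<in>{s\<in>SO j. s l = r}. q j s x) has_derivative (\<lambda>h. \<Sum>s\<in>{s\<in>SO j. s l = r}. g j s \<bullet> h)) (at \<theta>)"
      by (rule has_derivative_sum) (rule g[OF that], simp)
    then show ?thesis unfolding GM_def M_def inner_sum_left .
  qed
  have sumGM: "(\<Sum>r\<in>{1..R j l}. GM j l r) = 0" if jl: "j<N" "l<L j" for j l
  proof -
    have d1: "((\<lambda>x. \<Sum>r\<in>{1..R j l}. M j l r x) has_derivative (\<lambda>h. \<Sum>r\<in>{1..R j l}. GM j l r \<bullet> h)) (at \<theta>)"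
      by (rule has_derivative_sum) (rule dM[OF jl(1)])
    have d2: "((\<lambda>x. \<Sum>r\<in>{1..R j l}. M j l r x) has_derivative (\<lambda>h. 0)) (at \<theta>)"
    proof (rule has_derivative_transform_within_open[OF _ open_interior th])
      show "((\<lambda>x. 1::real) has_derivative (\<lambda>h. 0)) (at \<theta>)" by (rule has_derivative_const)
    next
      fix x assume "x \<in> interior \<Theta>"
      then have xT: "x \<in> \<Theta>" by (rule subsetD[OF interior_subset])
      have "(\<Sum>r\<in>{1..R j l}. M j l r x) = (\<Sum>r\<in>{1..R j l}. m j l r x)"
        by (rule sum.cong[OF refl]) (rule marginal[OF jl xT, symmetric])
      then show "1 = (\<Sum>r\<in>{1..R j l}. M j l r x)" using m_sum[OF jl xT] by simp
    qed
    have "(\<Sum>r\<in>{1..R j l}. GM j l r) \<bullet> v = 0" for v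
      using inner_deriv_unique[OF _ d2, of "\<Sum>r\<in>{1..R j l}. GM j l r" v] d1
      by (simp add: inner_sum_left)
    then show ?thesis by (metis inner_eq_zero_iff)
  qed
  define GS where "GS = (\<lambda>(j,l,r). GM j l r) ` K"
  have "dim GS \<le> card GS" by (rule dim_le_card) (auto simp: GS_def finK span_superset)
  also have "\<dots> \<le> card K" unfolding GS_def by (rule card_image_le[OF finK])
  also have "\<dots> < CARD('d)" using cardK dimh by simp
  finally have "dim GS < DIM(real^'d)" by simp
  then obtain v :: "real^'d" where v: "v \<noteq> 0" "\<And>y. y \<in> span GS \<Longrightarrow> orthogonal v y"
    by (rule orthogonal_to_subspace_exists) blast
  have vK: "v \<bullet> GM j l r = 0" if "j<N" "l<L j" "r\<in>{1..<R j l}" for j l r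
  proof -
    have "(j,l,r) \<in> K" using that by (simp add: K_def)
    then have "GM j l r \<in> GS" unfolding GS_def by force
    then have "orthogonal v (GM j l r)" using v(2) span_base by blast
    then show ?thesis by (simp add: orthogonal_def)
  qed
  have vall: "v \<bullet> GM j l r = 0" if jl: "j<N" "l<L j" and r: "r\<in>{1..R j l}" for j l r
  proof (cases "r < R j l")
    case True then show ?thesis using vK[OF jl] r by simp
  next
    case False
    then have rR: "r = R j l" using r by simp
    have ins: "{1..R j l} = insert (R j l) {1..<R j l}" using R_pos[OF jl] by auto
    have "0 = v \<bullet> (\<Sum>r\<in>{1..R j l}. GM j l r)" using sumGM[OF jl] by simp
    also have "\<dots> = v \<bullet> GM j l (R j l) + (\<Sum>r\<in>{1..<R j l}. v \<bullet> GM j l r)"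
      unfolding ins by (simp add: inner_add_right inner_sum_right)
    also have "(\<Sum>r\<in>{1..<R j l}. v \<bullet> GM j l r) = 0"
      by (rule sum.neutral) (use vK[OF jl] in simp)
    finally show ?thesis using rR by simp
  qed
  have gv: "g j s \<bullet> v = 0" if js: "j<N" "s\<in>SO j" for j s
  proof -
    have d2: "((\<lambda>x. \<Prod>l<L j. M j l (s l) x) has_derivative
         (\<lambda>h. \<Sum>l<L j. (GM j l (s l) \<bullet> h) * (\<Prod>l'\<in>{..<L j}-{l}. M j l' (s l') \<theta>))) (at \<theta>)"
      by (rule has_derivative_prod) (rule dM[OF js(1)])
    have d3: "(q j s has_derivative
         (\<lambda>h. \<Sum>l<L j. (GM j l (s l) \<bullet> h) * (\<Prod>l'\<in>{..<L j}-{l}. M j l' (s l') \<theta>))) (at \<theta>)"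
    proof (rule has_derivative_transform_within_open[OF d2 open_interior th])
      fix x assume "x \<in> interior \<Theta>"
      then have xT: "x \<in> \<Theta>" by (rule subsetD[OF interior_subset])
      show "(\<Prod>l<L j. M j l (s l) x) = q j s x" using q_M[OF js xT] by simp
    qed
    have "g j s \<bullet> v = (\<Sum>l<L j. (GM j l (s l) \<bullet> v) * (\<Prod>l'\<in>{..<L j}-{l}. M j l' (s l') \<theta>))"
      by (rule inner_deriv_unique[OF g[OF js] d3])
    also have "\<dots> = 0"
    proof (rule sum.neutral, rule ballI)
      fix l assume "l \<in> {..<L j}"
      then have "GM j l (s l) \<bullet> v = 0" using vall[OF js(1) _ SO_mem[OF js(2)]] by (simp add: inner_commute)
      then show "(GM j l (s l) \<bullet> v) * (\<Prod>l'\<in>{..<L j}-{l}. M j l' (s l') \<theta>) = 0" by simp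
    qed
    finally show ?thesis .
  qed
  have grad_eq: "grad (q j s) \<theta> = g j s" if js: "j<N" "s\<in>SO j" for j s
  proof -
    have "frechet_derivative (q j s) (at \<theta>) = (\<lambda>h. g j s \<bullet> h)"
      using frechet_derivative_at[OF g[OF js]] by simp
    then show ?thesis unfolding grad_def by (simp add: vec_eq_iff inner_axis)
  qed
  have outer_mv: "outer a *v v = (a \<bullet> v) *\<^sub>R a" for a :: "real^'d"
    by (simp add: vec_eq_iff outer_def matrix_vector_mult_def inner_vec_def sum_distrib_left
        sum_distrib_right mult.assoc mult.commute mult.left_commute)
  have sum_mv: "(\<Sum>x\<in>A. F x) *v v = (\<Sum>x\<in>A. F x *v v)" for A and F :: "'z \<Rightarrow> real^'d^'d"
    by (induct A rule: infinite_finite_induct) (simp_all add: matrix_vector_mult_add_rdistrib)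
  have "fisher_info N (\<lambda>j. sensor_outputs (L j) (R j)) (sensor_prob P I R L) \<theta> *v v
      = (\<Sum>j<N. \<Sum>s\<in>SO j. (1 / q j s \<theta>) *\<^sub>R (outer (grad (q j s) \<theta>) *v v))"
    unfolding fisher_info_def sum_mv scaleR_matrix_vector_assoc ..
  also have "\<dots> = 0"
  proof (rule sum.neutral, rule ballI, rule sum.neutral, rule ballI)
    fix j s assume "j \<in> {..<N}" "s \<in> SO j"
    then have js: "j<N" "s\<in>SO j" by auto
    show "(1 / q j s \<theta>) *\<^sub>R (outer (grad (q j s) \<theta>) *v v) = 0"
      unfolding grad_eq[OF js] outer_mv gv[OF js] by simp
  qed
  finally have "fisher_info N (\<lambda>j. sensor_outputs (L j) (R j)) (sensor_prob P I R L) \<theta> *v v = 0" .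
  moreover have "\<forall>x. fisher_info N (\<lambda>j. sensor_outputs (L j) (R j)) (sensor_prob P I R L) \<theta> *v x = 0 \<longrightarrow> x = 0"
    using inv unfolding invertible_def matrix_left_invertible_ker[symmetric] by (elim exE conjE) (rule exI)
  ultimately show False using v(1) by simp
qed

lemma nonident_infinite:
  assumes cont: "\<forall>j<N. \<forall>s\<in>SO j. continuous_on \<Theta> (q j s)"
    and dimh: "int CARD('d) > lambda_indep N L R"
    and U: "open U" "U \<noteq> {}" "U \<subseteq> \<Theta>"
  shows "infinite {\<theta> \<in> U. nonidentifiable_point \<Theta> (joint_outputs N L R) (joint_prob P I R L N) \<theta>}"
    (is "infinite ?F")
proof
  assume fin: "finite ?F"
  define W where "W = U - ?F"
  have oW: "open W" unfolding W_def using U(1) fin by (intro open_Diff finite_imp_closed)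
  have neW: "W \<noteq> {}"
  proof
    assume "W = {}"
    then have "U \<subseteq> ?F" unfolding W_def by (simp only: Diff_eq_empty_iff)
    then have "finite U" using fin by (rule finite_subset)
    then show False using finite_imp_not_open U(1,2) by metis
  qed
  have WT: "W \<subseteq> \<Theta>" using U(3) unfolding W_def by auto
  have mc: "continuous_on \<Theta> (m j l r)" if jlr: "j<N" "l<L j" "r\<in>{1..R j l}" for j l r
  proof -
    have "continuous_on \<Theta> (M j l r)" unfolding M_def
      by (rule continuous_on_sum) (use cont jlr(1) in simp)
    moreover have "\<And>x. x \<in> \<Theta> \<Longrightarrow> M j l r x = m j l r x"
      using marginal[OF jlr(1,2) _ jlr(3)] by simp
    ultimately show ?thesis using continuous_on_cong[OF refl, of \<Theta> "M j l r" "m j l r"] by simp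
  qed
  have cK: "card K < CARD('d)" using cardK dimh by simp
  obtain h :: "nat \<times> nat \<times> nat \<Rightarrow> 'd" where h: "inj_on h K"
  proof -
    have "finite (UNIV :: 'd set)" by simp
    then obtain h0 :: "nat \<times> nat \<times> nat \<Rightarrow> 'd" where "h0 ` K \<subseteq> UNIV \<and> inj_on h0 K"
      using card_le_inj[OF finK, of "UNIV :: 'd set"] cK by (auto simp: less_imp_le)
    then show ?thesis using that by blast
  qed
  define mk where "mk k = (case k of (j,l,r) \<Rightarrow> m j l r)" for k
  have mkc: "continuous_on W (mk k)" if "k \<in> K" for k
  proof -
    obtain j l r where k: "k = (j,l,r)" by (cases k) auto
    have "j<N" "l<L j" "r\<in>{1..R j l}" using that unfolding k K_def by auto
    then have "continuous_on \<Theta> (m j l r)" by (rule mc)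
    then show ?thesis unfolding k mk_def using WT by (simp add: continuous_on_subset)
  qed
  define f where "f \<theta> = (\<Sum>k\<in>K. mk k \<theta> *\<^sub>R axis (h k) (1::real))" for \<theta>
  have fcomp: "f \<theta> $ h k0 = mk k0 \<theta>" if "k0 \<in> K" for \<theta> k0
  proof -
    have "f \<theta> $ h k0 = (\<Sum>k\<in>K. mk k \<theta> * (if h k0 = h k then 1 else 0))"
      by (simp add: f_def axis_def)
    also have "\<dots> = (\<Sum>k\<in>K. if k = k0 then mk k \<theta> else 0)"
    proof (rule sum.cong[OF refl])
      fix k assume "k \<in> K"
      then have "h k0 = h k \<longleftrightarrow> k = k0" using h that unfolding inj_on_def by metis
      then show "mk k \<theta> * (if h k0 = h k then 1 else 0) = (if k = k0 then mk k \<theta> else 0)" by simp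
    qed
    also have "\<dots> = mk k0 \<theta>" using that finK by (simp add: sum.delta)
    finally show ?thesis .
  qed
  have injf: "inj_on f W"
  proof (rule inj_onI)
    fix a b assume a: "a \<in> W" and b: "b \<in> W" and fab: "f a = f b"
    have aT: "a \<in> \<Theta>" and bT: "b \<in> \<Theta>" using a b WT by auto
    have mK: "m j l r a = m j l r b" if "j<N" "l<L j" "r\<in>{1..<R j l}" for j l r
    proof -
      have k: "(j,l,r) \<in> K" using that by (simp add: K_def)
      have "mk (j,l,r) a = mk (j,l,r) b" using fcomp[OF k, of a] fcomp[OF k, of b] fab by simp
      then show ?thesis by (simp add: mk_def)
    qed
    have mall: "m j l r a = m j l r b" if jl: "j<N" "l<L j" and r: "r\<in>{1..R j l}" for j l r
    proof (cases "r < R j l")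
      case True then show ?thesis using mK[OF jl] r by simp
    next
      case False
      then have rR: "r = R j l" using r by simp
      have ins: "{1..R j l} = insert (R j l) {1..<R j l}" using R_pos[OF jl] by auto
      have "m j l (R j l) a + (\<Sum>r\<in>{1..<R j l}. m j l r a) = m j l (R j l) b + (\<Sum>r\<in>{1..<R j l}. m j l r b)"
        using m_sum[OF jl aT] m_sum[OF jl bT] unfolding ins by simp
      moreover have "(\<Sum>r\<in>{1..<R j l}. m j l r a) = (\<Sum>r\<in>{1..<R j l}. m j l r b)"
        by (rule sum.cong[OF refl]) (rule mK[OF jl])
      ultimately show ?thesis using rR by simp
    qed
    have qeq: "q j s a = q j s b" if js: "j<N" "s\<in>SO j" for j s
      unfolding sensor_prob_mg
      by (rule prod.cong[OF refl]) (rule mall[OF js(1) _ SO_mem[OF js(2)]], simp, simp)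
    have Peq: "\<forall>u\<in>joint_outputs N L R. joint_prob P I R L N u a = joint_prob P I R L N u b"
    proof
      fix u assume u: "u \<in> joint_outputs N L R"
      have uj: "u j \<in> SO j" if "j<N" for j using u that unfolding joint_outputs_def by (auto simp: PiE_iff)
      show "joint_prob P I R L N u a = joint_prob P I R L N u b"
        unfolding joint_prob_def by (rule prod.cong[OF refl]) (rule qeq, simp, rule uj, simp)
    qed
    show "a = b"
    proof (rule ccontr)
      assume "a \<noteq> b"
      then have "obs_equiv \<Theta> (joint_outputs N L R) (joint_prob P I R L N) a b"
        unfolding obs_equiv_def using aT bT Peq by simp
      then have "nonidentifiable_point \<Theta> (joint_outputs N L R) (joint_prob P I R L N) a"
        unfolding nonidentifiable_point_def using aT by blast
      then have "a \<in> ?F" using a unfolding W_def by simp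
      then show False using a unfolding W_def by simp
    qed
  qed
  define B where "B = (\<lambda>k. axis (h k) (1::real)) ` K"
  have fim: "f \<in> W \<rightarrow> span B"
  proof
    fix x assume "x \<in> W"
    show "f x \<in> span B" unfolding f_def
      by (rule span_sum, rule span_mul, rule span_base) (simp add: B_def)
  qed
  have cf: "continuous_on W f" unfolding f_def
    by (rule continuous_on_sum, rule continuous_on_scaleR) (auto intro: mkc)
  have ope: "openin (top_of_set UNIV) W" using oW by simp
  have "dim (UNIV :: (real^'d) set) \<le> dim (span B)"
    by (rule invariance_of_dimension_subspaces[OF ope subspace_UNIV subspace_span cf fim injf neW])
  also have "\<dots> \<le> card B" by (rule dim_le_card) (auto simp: B_def finK)
  also have "\<dots> \<le> card K" unfolding B_def by (rule card_image_le[OF finK])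
  finally show False using cK by simp
qed

end

theorem theorem4:
  fixes N :: nat and L :: "nat \<Rightarrow> nat" and R :: "nat \<Rightarrow> nat \<Rightarrow> nat"
    and S :: "nat \<Rightarrow> nat \<Rightarrow> 'a measure"
    and P :: "nat \<Rightarrow> nat \<Rightarrow> real^'d \<Rightarrow> 'a measure"
    and I :: "nat \<Rightarrow> nat \<Rightarrow> nat \<Rightarrow> 'a set"
    and \<Theta> :: "(real^'d) set"
  assumes model: "\<And>j l \<theta>. j < N \<Longrightarrow> l < L j \<Longrightarrow> \<theta> \<in> \<Theta> \<Longrightarrow>
                    prob_space (P j l \<theta>) \<and> sets (P j l \<theta>) = sets (S j l)"
    and regions_meas: "\<And>j l r. j < N \<Longrightarrow> l < L j \<Longrightarrow> r \<in> {1..R j l} \<Longrightarrow> I j l r \<in> sets (S j l)"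
    and regions_disj: "\<And>j l. j < N \<Longrightarrow> l < L j \<Longrightarrow> disjoint_family_on (I j l) {1..R j l}"
    and regions_cover: "\<And>j l. j < N \<Longrightarrow> l < L j \<Longrightarrow> (\<Union>r\<in>{1..R j l}. I j l r) = space (S j l)"
    and int_nonempty: "interior \<Theta> \<noteq> {}"
    and dim: "int CARD('d) > lambda_indep N L R"
  shows "((\<forall>j<N. \<forall>s\<in>sensor_outputs (L j) (R j).
              twice_differentiable_on (sensor_prob P I R L j s) \<Theta>)
          \<longrightarrow> (\<forall>\<theta>\<in>interior \<Theta>.
                \<not> invertible (fisher_info N (\<lambda>j. sensor_outputs (L j) (R j)) (sensor_prob P I R L) \<theta>)))
       \<and> ((\<forall>j<N. \<forall>s\<in>sensor_outputs (L j) (R j). continuous_on \<Theta> (sensor_prob P I R L j s))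
          \<longrightarrow> \<not> identifiable_space \<Theta> (joint_outputs N L R) (joint_prob P I R L N)
              \<and> (\<forall>U. open U \<and> U \<noteq> {} \<and> U \<subseteq> \<Theta> \<longrightarrow>
                    infinite {\<theta> \<in> U. nonidentifiable_point \<Theta> (joint_outputs N L R) (joint_prob P I R L N) \<theta>}))"
proof -
  have Tne: "\<Theta> \<noteq> {}" using int_nonempty interior_subset by blast
  interpret qsys N L R S P I \<Theta>
    by (unfold_locales) (fact model regions_meas regions_disj regions_cover Tne)+
  show ?thesis
  proof (intro conjI impI)
    assume A: "\<forall>j<N. \<forall>s\<in>sensor_outputs (L j) (R j). twice_differentiable_on (sensor_prob P I R L j s) \<Theta>"
    show "\<forall>\<theta>\<in>interior \<Theta>.
                \<not> invertible (fisher_info N (\<lambda>j. sensor_outputs (L j) (R j)) (sensor_prob P I R L) \<theta>)"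
      using fisher_singular[OF A _ dim] by blast
  next
    assume C: "\<forall>j<N. \<forall>s\<in>sensor_outputs (L j) (R j). continuous_on \<Theta> (sensor_prob P I R L j s)"
    show "\<not> identifiable_space \<Theta> (joint_outputs N L R) (joint_prob P I R L N)"
    proof
      assume idsp: "identifiable_space \<Theta> (joint_outputs N L R) (joint_prob P I R L N)"
      have "infinite {\<theta> \<in> interior \<Theta>. nonidentifiable_point \<Theta> (joint_outputs N L R) (joint_prob P I R L N) \<theta>}"
        by (rule nonident_infinite[OF C dim open_interior int_nonempty interior_subset])
      then obtain \<theta> where th: "\<theta> \<in> {\<theta> \<in> interior \<Theta>. nonidentifiable_point \<Theta> (joint_outputs N L R) (joint_prob P I R L N) \<theta>}"
        using not_finite_existsD by blast
      then have "\<theta> \<in> \<Theta>" "\<exists>\<theta>'. obs_equiv \<Theta> (joint_outputs N L R) (joint_prob P I R L N) \<theta> \<theta>'"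
        unfolding nonidentifiable_point_def by auto
      then show False using idsp unfolding identifiable_space_def identifiable_point_def by blast
    qed
  next
    assume C: "\<forall>j<N. \<forall>s\<in>sensor_outputs (L j) (R j). continuous_on \<Theta> (sensor_prob P I R L j s)"
    show "\<forall>U. open U \<and> U \<noteq> {} \<and> U \<subseteq> \<Theta> \<longrightarrow>
                    infinite {\<theta> \<in> U. nonidentifiable_point \<Theta> (joint_outputs N L R) (joint_prob P I R L N) \<theta>}"
      using nonident_infinite[OF C dim] by blast
  qed
qed

end
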